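(* Let $(\Omega,\mathsf F)$ be an $n$-dimensional Funk metric space and $\phi$ the Minkowski norm on $\mathbb R^n$ with $\partial\Omega=\phi^{-1}(1)$ and $\mathsf F(x,y)=\phi(y+x\mathsf F(x,y))$. If $f$ is a measurable function on $\mathbb R$ with $f\circ\phi\in L^1(\Omega,\mathscr L^n)$, then $$\int_\Omega f\circ\phi\,d\mathfrak m_{BH}=n\omega_n\int_0^1f(t)t^{n-1}\,dt=n\omega_n\int_0^{+\infty}f(1-e^{-r})e^{-r}(1-e^{-r})^{n-1}\,dr.$$
   Context: A Funk metric space is a pair $(\Omega,\mathsf F)$ with $\Omega\subset\mathbb R^n$ ($n\ge2$) a bounded domain and $\mathsf F$ a Finsler metric on $\Omega$ satisfying $x+y/\mathsf F(x,y)\in\partial\Omega$ for all $x\in\Omega$, $y\neq0$; it is known that there is a unique Minkowski norm $\phi$ on $\mathbb R^n$ with $\partial\Omega=\phi^{-1}(1)$, $\mathsf F(x,y)=\phi(y+x\mathsf F(x,y))$, and $\Omega=\{\phi<1\}$. $\omega_n$ is the Lebesgue volume of the Euclidean unit ball in $\mathbb R^n$. The Busemann--Hausdorff measure is $d\mathfrak m_{BH}=\frac{\omega_n}{\mathrm{vol}(B_x)}dx^1\cdots dx^n$ where $B_x=\{y\in T_x\Omega:\mathsf F(x,y)<1\}$ and $\mathrm{vol}$ is Lebesgue measure. *)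

theory Defs
  imports "HOL-Analysis.Analysis"
begin

fun Ck_on :: "nat \<Rightarrow> 'a::euclidean_space set \<Rightarrow> ('a \<Rightarrow> real) \<Rightarrow> bool" where
  "Ck_on 0 S f = continuous_on S f"
| "Ck_on (Suc k) S f = (f differentiable_on S \<and>
      (\<forall>b\<in>Basis. Ck_on k S (\<lambda>x. frechet_derivative f (at x) b)))"

definition smooth_on :: "'a::euclidean_space set \<Rightarrow> ('a \<Rightarrow> real) \<Rightarrow> bool" where
  "smooth_on S f \<longleftrightarrow> (\<forall>k. Ck_on k S f)"

text \<open>Minkowski norm on R^n: nonnegative, smooth off the origin, positively 1-homogeneous,
  and strongly convex (the Hessian of phi^2/2 is positive definite at every y \<noteq> 0).\<close>
definition minkowski_norm :: "(real^'n \<Rightarrow> real) \<Rightarrow> bool" where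
  "minkowski_norm \<phi> \<longleftrightarrow>
     (\<forall>y. \<phi> y \<ge> 0) \<and>
     smooth_on (UNIV - {0}) \<phi> \<and>
     (\<forall>y. \<forall>c>0. \<phi> (c *\<^sub>R y) = c * \<phi> y) \<and>
     (\<forall>y v. y \<noteq> 0 \<longrightarrow> v \<noteq> 0 \<longrightarrow>
        deriv (deriv (\<lambda>t. (\<phi> (y + t *\<^sub>R v))\<^sup>2 / 2)) 0 > 0)"

definition finsler_metric :: "(real^'n) set \<Rightarrow> (real^'n \<Rightarrow> real^'n \<Rightarrow> real) \<Rightarrow> bool" where
  "finsler_metric \<Omega> F \<longleftrightarrow>
     (\<forall>x\<in>\<Omega>. \<forall>y. F x y \<ge> 0) \<and>
     smooth_on (\<Omega> \<times> (UNIV - {0})) (\<lambda>(x, y). F x y) \<and>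
     (\<forall>x\<in>\<Omega>. \<forall>y. \<forall>c>0. F x (c *\<^sub>R y) = c * F x y) \<and>
     (\<forall>x\<in>\<Omega>. \<forall>y v. y \<noteq> 0 \<longrightarrow> v \<noteq> 0 \<longrightarrow>
        deriv (deriv (\<lambda>t. (F x (y + t *\<^sub>R v))\<^sup>2 / 2)) 0 > 0)"

definition funk_metric_space :: "(real^'n) set \<Rightarrow> (real^'n \<Rightarrow> real^'n \<Rightarrow> real) \<Rightarrow> bool" where
  "funk_metric_space \<Omega> F \<longleftrightarrow>
     CARD('n) \<ge> 2 \<and> open \<Omega> \<and> connected \<Omega> \<and> \<Omega> \<noteq> {} \<and> bounded \<Omega> \<and>
     finsler_metric \<Omega> F \<and>
     (\<forall>x\<in>\<Omega>. \<forall>y. y \<noteq> 0 \<longrightarrow> x + (1 / F x y) *\<^sub>R y \<in> frontier \<Omega>)"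

definition omega :: "'n::finite itself \<Rightarrow> real" where
  "omega _ = measure lborel (ball (0 :: real^'n) 1)"

definition BH_measure :: "(real^'n) set \<Rightarrow> (real^'n \<Rightarrow> real^'n \<Rightarrow> real) \<Rightarrow> (real^'n) measure" where
  "BH_measure \<Omega> F = density (restrict_space lborel \<Omega>)
     (\<lambda>x. ennreal (omega TYPE('n) / measure lborel {y. F x y < 1}))"

end

theory Submission
  imports Defs
begin

lemma phi_zero:
  assumes mink: "minkowski_norm (\<phi>::real^'n \<Rightarrow> real)"
  shows "\<phi> 0 = 0"
proof -
  have "\<forall>y. \<forall>c>0. \<phi> (c *\<^sub>R y) = c * \<phi> y" using mink unfolding minkowski_norm_def by blast
  from this[rule_format, where y=0 and c=2] have "\<phi> 0 = 2 * \<phi> 0" by simp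
  thus ?thesis by simp
qed

lemma phi_hom:
  assumes mink: "minkowski_norm (\<phi>::real^'n \<Rightarrow> real)" and "c > 0"
  shows "\<phi> (c *\<^sub>R y) = c * \<phi> y"
  using assms unfolding minkowski_norm_def by blast

lemma H_facts:
  fixes \<phi> :: "real^'n \<Rightarrow> real"
  assumes mink: "minkowski_norm \<phi>" and y: "y \<noteq> 0"
  shows "\<exists>r>0. \<exists>H'. (\<forall>s. \<bar>s\<bar> < r \<longrightarrow> ((\<lambda>s. (\<phi> (y + s *\<^sub>R v))\<^sup>2 / 2) has_real_derivative H' s) (at s))
      \<and> (H' has_real_derivative deriv (deriv (\<lambda>s. (\<phi> (y + s *\<^sub>R v))\<^sup>2 / 2)) 0) (at 0)"
proof -
  let ?P = "UNIV - {0::real^'n}"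
  have opP: "open ?P" by (intro open_Diff) auto
  from mink have "Ck_on (Suc (Suc 0)) ?P \<phi>" unfolding minkowski_norm_def smooth_on_def by blast
  hence d1: "\<phi> differentiable_on ?P"
    and d2: "\<forall>b\<in>Basis. (\<lambda>x. frechet_derivative \<phi> (at x) b) differentiable_on ?P" by auto
  define D where "D x = frechet_derivative \<phi> (at x)" for x
  have hasD: "(\<phi> has_derivative D x) (at x)" if "x \<noteq> 0" for x
  proof -
    have "\<phi> differentiable at x" using d1 opP that by (simp add: differentiable_on_eq_differentiable_at)
    thus ?thesis unfolding D_def by (simp add: frechet_derivative_works[symmetric])
  qed
  have linD: "linear (D x)" if "x \<noteq> 0" for x using hasD[OF that] has_derivative_linear by blast
  have Dsum: "D x v = (\<Sum>b\<in>Basis. (v \<bullet> b) * D x b)" if "x \<noteq> 0" for x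
  proof -
    have "D x v = D x (\<Sum>b\<in>Basis. (v \<bullet> b) *\<^sub>R b)" by (simp add: euclidean_representation)
    also have "\<dots> = (\<Sum>b\<in>Basis. (v \<bullet> b) * D x b)"
      using linD[OF that] by (simp add: linear_sum linear_scale)
    finally show ?thesis .
  qed
  have d2': "(\<lambda>x. D x b) differentiable at x" if "x \<noteq> 0" "b \<in> Basis" for x b
    using d2 opP that unfolding D_def by (simp add: differentiable_on_eq_differentiable_at)
  define r where "r = norm y / (norm v + 1)"
  have nv: "0 < norm v + 1" using norm_ge_zero[of v] by linarith
  have r: "r > 0" using y nv unfolding r_def by (intro divide_pos_pos) auto
  have nz: "y + s *\<^sub>R v \<noteq> 0" if "\<bar>s\<bar> < r" for s
  proof
    assume "y + s *\<^sub>R v = 0"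
    hence "norm y = \<bar>s\<bar> * norm v" by (metis add_eq_0_iff norm_minus_cancel norm_scaleR)
    also have "\<dots> \<le> r * norm v" using that by (simp add: mult_right_mono)
    also have "\<dots> < norm y"
    proof -
      have "norm v / (norm v + 1) < 1" using nv by (simp add: divide_less_eq_1_pos)
      hence "norm y * (norm v / (norm v + 1)) < norm y * 1" using y by (intro mult_strict_left_mono) auto
      thus ?thesis unfolding r_def by simp
    qed
    finally show False by simp
  qed
  define H' where "H' s = \<phi> (y + s *\<^sub>R v) * (\<Sum>b\<in>Basis. (v \<bullet> b) * D (y + s *\<^sub>R v) b)" for s
  have lin1: "((\<lambda>s. y + s *\<^sub>R v) has_derivative (\<lambda>h. h *\<^sub>R v)) (at s)" for s
    by (auto intro!: derivative_eq_intros)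
  have dphi: "((\<lambda>s. \<phi> (y + s *\<^sub>R v)) has_real_derivative D (y + s *\<^sub>R v) v) (at s)"
    if "y + s *\<^sub>R v \<noteq> 0" for s
  proof -
    have "((\<lambda>s. \<phi> (y + s *\<^sub>R v)) has_derivative (\<lambda>h. D (y + s *\<^sub>R v) (h *\<^sub>R v))) (at s)"
      using has_derivative_compose[OF lin1 hasD[OF that]] by (simp add: o_def)
    moreover have "(\<lambda>h. D (y + s *\<^sub>R v) (h *\<^sub>R v)) = (*) (D (y + s *\<^sub>R v) v)"
      by (rule ext) (simp add: linear_scale[OF linD[OF that]] mult.commute)
    ultimately show ?thesis by (simp add: has_field_derivative_def)
  qed
  have derH: "((\<lambda>s. (\<phi> (y + s *\<^sub>R v))\<^sup>2 / 2) has_real_derivative H' s) (at s)" if "\<bar>s\<bar> < r" for s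
  proof -
    have "((\<lambda>s. (\<phi> (y + s *\<^sub>R v))\<^sup>2 / 2) has_real_derivative
        (2 * \<phi> (y + s *\<^sub>R v) * D (y + s *\<^sub>R v) v) / 2) (at s)"
      by (auto intro!: derivative_eq_intros dphi[OF nz[OF that]])
    thus ?thesis unfolding H'_def using Dsum[OF nz[OF that]] by simp
  qed
  have dcomp: "(\<lambda>s. D (y + s *\<^sub>R v) b) differentiable at 0" if "b \<in> Basis" for b
  proof -
    have "(\<lambda>s. y + s *\<^sub>R v) differentiable at 0" unfolding differentiable_def using lin1 by blast
    moreover have "(\<lambda>x. D x b) differentiable at ((\<lambda>s. y + s *\<^sub>R v) 0)" using d2'[OF _ that] y by simp
    ultimately show ?thesis using differentiable_chain_at[of "\<lambda>s. y + s *\<^sub>R v" 0 "\<lambda>x. D x b"]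
      by (simp add: o_def)
  qed
  have dphi0: "(\<lambda>s. \<phi> (y + s *\<^sub>R v)) differentiable at 0"
    using dphi[of 0] y unfolding real_differentiable_def by auto
  have "H' differentiable at 0"
    unfolding H'_def
    by (intro differentiable_mult differentiable_sum differentiable_const dphi0 dcomp ballI finite_Basis)
  hence H'd: "(H' has_real_derivative deriv H' 0) (at 0)" by (simp only: DERIV_deriv_iff_real_differentiable)
  have "(deriv (\<lambda>s. (\<phi> (y + s *\<^sub>R v))\<^sup>2 / 2) has_real_derivative deriv H' 0) (at 0)"
  proof (rule has_field_derivative_transform_within_open[OF H'd, of "ball 0 r"])
    show "open (ball 0 r)" by simp
    show "(0::real) \<in> ball 0 r" using r by simp
    fix s :: real assume "s \<in> ball 0 r"
    hence sr: "\<bar>s\<bar> < r" by simp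
    show "H' s = deriv (\<lambda>s. (\<phi> (y + s *\<^sub>R v))\<^sup>2 / 2) s" using DERIV_imp_deriv[OF derH[OF sr]] by simp
  qed
  hence eq: "deriv (deriv (\<lambda>s. (\<phi> (y + s *\<^sub>R v))\<^sup>2 / 2)) 0 = deriv H' 0" by (rule DERIV_imp_deriv)
  have H'd2: "(H' has_real_derivative deriv (deriv (\<lambda>s. (\<phi> (y + s *\<^sub>R v))\<^sup>2 / 2)) 0) (at 0)"
    unfolding eq by (rule H'd)
  have A1: "\<forall>s. \<bar>s\<bar> < r \<longrightarrow> ((\<lambda>s. (\<phi> (y + s *\<^sub>R v))\<^sup>2 / 2) has_real_derivative H' s) (at s)"
    using derH by simp
  show ?thesis
    apply (rule exI[of _ r])
    apply (rule conjI[OF r])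
    apply (rule exI[of _ H'])
    apply (rule conjI[OF A1 H'd2])
    done
qed

lemma phi_nonneg:
  assumes mink: "minkowski_norm (\<phi>::real^'n \<Rightarrow> real)"
  shows "\<phi> y \<ge> 0"
  using assms unfolding minkowski_norm_def by blast

lemma phi_cont:
  assumes mink: "minkowski_norm (\<phi>::real^'n \<Rightarrow> real)" and "x \<noteq> 0"
  shows "isCont \<phi> x"
proof -
  have "Ck_on 0 (UNIV - {0}) \<phi>" using mink unfolding minkowski_norm_def smooth_on_def by blast
  hence "continuous_on (UNIV - {0}) \<phi>" by simp
  moreover have "open (UNIV - {0::real^'n})" by (intro open_Diff) auto
  ultimately show ?thesis using assms(2) continuous_on_eq_continuous_at by blast
qed

lemma phi_sec:
  assumes mink: "minkowski_norm (\<phi>::real^'n \<Rightarrow> real)" and "y \<noteq> 0" "v \<noteq> 0"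
  shows "deriv (deriv (\<lambda>t. (\<phi> (y + t *\<^sub>R v))\<^sup>2 / 2)) 0 > 0"
  using assms unfolding minkowski_norm_def by blast

lemma omega_convex:
  fixes \<phi> :: "real^'n \<Rightarrow> real"
  assumes mink: "minkowski_norm \<phi>"
  shows "convex {v. \<phi> v < 1}"
  unfolding convex_contains_segment
proof (intro ballI subsetI)
  fix a b z assume a: "a \<in> {v. \<phi> v < 1}" and b: "b \<in> {v. \<phi> v < 1}" and z: "z \<in> closed_segment a b"
  have seg0: "\<phi> w < 1" if sc1: "\<phi> c < 1" and sc2: "w \<in> closed_segment 0 c" for c w
  proof -
    obtain u where u: "0 \<le> u" "u \<le> 1" "w = u *\<^sub>R c" using sc2 by (auto simp: in_segment)
    show ?thesis
    proof (cases "u = 0")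
      case True thus ?thesis using u phi_zero[OF mink] by simp
    next
      case False
      hence "\<phi> w = u * \<phi> c" using u phi_hom[OF mink] by simp
      also have "\<dots> \<le> 1 * \<phi> c" using u phi_nonneg[OF mink, of c] by (intro mult_right_mono) auto
      finally show ?thesis using sc1 by simp
    qed
  qed
  show "z \<in> {v. \<phi> v < 1}"
  proof (cases "0 \<in> closed_segment a b")
    case True
    then have "z \<in> closed_segment 0 a \<union> closed_segment 0 b"
      using Un_closed_segment[OF True] z closed_segment_commute by blast
    thus ?thesis using seg0 a b by auto
  next
    case False
    show ?thesis
    proof (rule ccontr)
      assume zn: "z \<notin> {v. \<phi> v < 1}"
      have ab: "a \<noteq> b" using z zn a by auto
      define p where "p t = a + t *\<^sub>R (b - a)" for t
      define g where "g t = (\<phi> (p t))\<^sup>2 / 2" for t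
      have pseg: "p t \<in> closed_segment a b" if "0 \<le> t" "t \<le> 1" for t
        using that unfolding p_def in_segment by (intro exI[of _ t]) (auto simp: algebra_simps)
      have pnz: "p t \<noteq> 0" if "0 \<le> t" "t \<le> 1" for t using pseg[OF that] False by metis
      have "continuous_on {0..1} g"
      proof (intro continuous_at_imp_continuous_on ballI)
        fix t :: real assume "t \<in> {0..1}"
        hence c: "isCont \<phi> (p t)" using phi_cont[OF mink pnz] by auto
        have "isCont p t" unfolding p_def by (intro continuous_intros)
        hence "isCont (\<lambda>t. \<phi> (p t)) t" using c continuous_at_compose[of t p \<phi>] by (simp add: o_def)
        thus "isCont g t" unfolding g_def by (intro continuous_intros) auto
      qed
      then obtain t0 where t0: "t0 \<in> {0..1}" and t0max: "\<forall>t\<in>{0..1}. g t \<le> g t0"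
        using continuous_attains_sup[of "{0..1}" g] by auto
      obtain u where u: "0 \<le> u" "u \<le> 1" "z = (1 - u) *\<^sub>R a + u *\<^sub>R b" using z by (auto simp: in_segment)
      have "z = p u" unfolding p_def u(3) by (simp add: algebra_simps)
      hence "\<phi> (p u) \<ge> 1" using zn by simp
      hence "(\<phi> (p u))\<^sup>2 \<ge> 1" by (simp add: one_le_power)
      hence gu: "g u \<ge> 1/2" unfolding g_def by simp
      have small: "g t < 1/2" if "\<phi> (p t) < 1" for t
      proof -
        have "0 \<le> \<phi> (p t)" by (rule phi_nonneg[OF mink])
        hence "(\<phi> (p t))\<^sup>2 < 1" using that by (simp add: power_less_one_iff abs_square_less_1)
        thus ?thesis unfolding g_def by simp
      qed
      have g0: "g 0 < 1/2" using a small[of 0] by (simp add: p_def)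
      have g1: "g 1 < 1/2" using b small[of 1] by (simp add: p_def)
      have "g t0 \<ge> 1/2" using t0max u gu by force
      hence t0i: "0 < t0" "t0 < 1" using t0 g0 g1 by (auto simp: less_le)
      define y where "y = p t0"
      define v where "v = b - a"
      have y: "y \<noteq> 0" unfolding y_def using pnz t0 by auto
      have v: "v \<noteq> 0" unfolding v_def using ab by simp
      define H where "H s = (\<phi> (y + s *\<^sub>R v))\<^sup>2 / 2" for s
      have Hg: "H s = g (t0 + s)" for s
        unfolding H_def g_def y_def v_def p_def by (simp add: algebra_simps)
      obtain r H' where r: "r > 0"
        and dH: "\<forall>s. \<bar>s\<bar> < r \<longrightarrow> ((\<lambda>s. (\<phi> (y + s *\<^sub>R v))\<^sup>2 / 2) has_real_derivative H' s) (at s)"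
        and dH': "(H' has_real_derivative deriv (deriv (\<lambda>s. (\<phi> (y + s *\<^sub>R v))\<^sup>2 / 2)) 0) (at 0)"
        using H_facts[OF mink y, of v] by blast
      have dH2: "(H has_real_derivative H' s) (at s)" if "\<bar>s\<bar> < r" for s
        using dH that unfolding H_def by blast
      have dH'2: "(H' has_real_derivative deriv (deriv H) 0) (at 0)"
        using dH' unfolding H_def[abs_def] .
      have pos: "deriv (deriv H) 0 > 0" unfolding H_def[abs_def] by (rule phi_sec[OF mink y v])
      define d where "d = min r (min t0 (1 - t0))"
      have d: "d > 0" unfolding d_def using r t0i by auto
      have Hmax: "H s \<le> H 0" if "\<bar>s\<bar> < d" for s
      proof -
        have "t0 + s \<in> {0..1}" using that unfolding d_def by auto
        thus ?thesis unfolding Hg using t0max t0 by simp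
      qed
      have "H' 0 = 0"
        by (rule DERIV_local_max[OF dH2[of 0] d]) (use r Hmax in auto)
      obtain e where e: "e > 0" and einc: "\<forall>h>0. h < e \<longrightarrow> H' 0 < H' (0 + h)"
        using DERIV_pos_inc_right[OF dH'2 pos] by blast
      define h where "h = min e d / 2"
      have h: "0 < h" "h < e" "h < d" "h < r" using e d unfolding h_def d_def by auto
      obtain \<xi> where xi: "0 < \<xi>" "\<xi> < h" "H h - H 0 = (h - 0) * H' \<xi>"
        using MVT2[OF h(1), of H H'] dH2 h by force
      have "H' \<xi> > 0" using einc xi h \<open>H' 0 = 0\<close> by force
      hence "H h > H 0" using xi h by (simp add: algebra_simps)
      moreover have "H h \<le> H 0" using Hmax h by simp
      ultimately show False by simp
    qed
  qed
qed

lemma phi_meas: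
  assumes mink: "minkowski_norm (\<phi>::real^'n \<Rightarrow> real)"
  shows "\<phi> \<in> borel_measurable borel"
proof (rule borel_measurable_continuous_countable_exceptions[of "{0}"])
  show "countable {0::real^'n}" by simp
  show "continuous_on (- {0}) \<phi>"
    by (intro continuous_at_imp_continuous_on ballI phi_cont[OF mink]) auto
qed

lemma phi_scale:
  assumes mink: "minkowski_norm (\<phi>::real^'n \<Rightarrow> real)" and a: "a > 0"
  shows "{v. \<phi> v < a} = (\<lambda>x. a *\<^sub>R x + 0) ` {v. \<phi> v < 1}"
proof (intro set_eqI iffI)
  fix v assume "v \<in> {v. \<phi> v < a}"
  moreover have "a * \<phi> ((1/a) *\<^sub>R v) = \<phi> v" using a phi_hom[OF mink, of "1/a" v] by (simp add: field_simps)
  ultimately have "a * \<phi> ((1/a) *\<^sub>R v) < a * 1" by simp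
  hence "\<phi> ((1/a) *\<^sub>R v) < 1" using a by (simp only: mult_less_cancel_left_pos)
  moreover have "v = a *\<^sub>R ((1/a) *\<^sub>R v) + 0" using a by simp
  ultimately show "v \<in> (\<lambda>x. a *\<^sub>R x + 0) ` {v. \<phi> v < 1}" by blast
next
  fix v assume "v \<in> (\<lambda>x. a *\<^sub>R x + 0) ` {v. \<phi> v < 1}"
  then obtain x where "\<phi> x < 1" "v = a *\<^sub>R x" by auto
  thus "v \<in> {v. \<phi> v < a}" using a phi_hom[OF mink a, of x] by simp
qed

lemma emeas_scale:
  assumes mink: "minkowski_norm (\<phi>::real^'n \<Rightarrow> real)" and op: "open {v. \<phi> v < 1}" and a: "a > 0"
  shows "emeasure lborel {v. \<phi> v < a} = ennreal (a ^ CARD('n)) * emeasure lborel {v. \<phi> v < 1}"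
proof -
  have eq: "{v. \<phi> v < a} = (\<lambda>x. a *\<^sub>R x + 0) ` {v. \<phi> v < 1}" by (rule phi_scale[OF mink a])
  have "open ((\<lambda>x. a *\<^sub>R x) ` {v. \<phi> v < 1})" using op a by (intro open_scaling) auto
  hence opa: "open {v. \<phi> v < a}" unfolding eq by simp
  have "emeasure lebesgue {v. \<phi> v < a} = \<bar>a\<bar> ^ DIM(real^'n) * emeasure lebesgue {v. \<phi> v < 1}"
    unfolding eq by (rule emeasure_lebesgue_affine)
  thus ?thesis using op opa a by simp
qed

lemma Rats_no_top_less: "\<exists>q \<in> \<rat>. x < q" for x :: real
  using Rats_dense_in_real[of x "x + 1"] by auto

lemma measure_eqI_lessThan':
  fixes M N :: "real measure"
  assumes sets: "sets M = sets borel" "sets N = sets borel"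
  assumes fin: "\<And>x. emeasure M {..< x} < \<infinity>"
  assumes "\<And>x. emeasure M {..< x} = emeasure N {..< x}"
  shows "M = N"
proof (rule measure_eqI_generator_eq_countable)
  let ?LT = "\<lambda>a::real. {..< a}" let ?E = "range ?LT"
  show "Int_stable ?E"
    unfolding Int_stable_def
  proof clarify
    fix a b :: real
    have "{..<a} \<inter> {..<b} = {..<min a b}" by auto
    thus "{..<a} \<inter> {..<b} \<in> range ?LT" by blast
  qed
  show "?E \<subseteq> Pow UNIV" "sets M = sigma_sets UNIV ?E" "sets N = sigma_sets UNIV ?E"
    unfolding sets borel_Iio by auto
  show "?LT`Rats \<subseteq> ?E" "(\<Union>i\<in>Rats. ?LT i) = UNIV" "\<And>a. a \<in> ?LT`Rats \<Longrightarrow> emeasure M a \<noteq> \<infinity>"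
    using fin by (auto intro: Rats_no_top_less simp: less_top)
qed (auto intro: assms countable_rat)

lemma dist_phi:
  fixes \<phi> :: "real^'n \<Rightarrow> real"
  assumes mink: "minkowski_norm \<phi>" and op: "open {v. \<phi> v < 1}" and bdd: "bounded {v. \<phi> v < 1}"
  shows "distr (restrict_space lborel {v. \<phi> v < 1}) borel \<phi> =
    density lborel (\<lambda>t. ennreal (real CARD('n) * measure lborel {v. \<phi> v < 1} * t ^ (CARD('n) - 1)) * indicator {0..1} t)"
    (is "?D = ?N")
proof -
  let ?\<Omega> = "{v. \<phi> v < 1}"
  let ?n = "CARD('n)"
  define V where "V = measure lborel ?\<Omega>"
  have meas[measurable]: "\<phi> \<in> borel_measurable borel" by (rule phi_meas[OF mink])
  have Osets[measurable]: "?\<Omega> \<in> sets borel" using op by simp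
  have fin: "emeasure lborel ?\<Omega> < \<infinity>" by (rule emeasure_bounded_finite[OF bdd])
  have EV: "emeasure lborel ?\<Omega> = ennreal V" unfolding V_def using fin by (simp add: emeasure_eq_ennreal_measure)
  have V0: "V \<ge> 0" unfolding V_def by simp
  have n0: "?n > 0" by simp
  define c where "c x = (if x \<le> 0 then 0 else min x 1)" for x :: real
  have lhs: "emeasure ?D {..<x} = ennreal (V * c x ^ ?n)" for x
  proof -
    have "emeasure ?D {..<x} = emeasure (restrict_space lborel ?\<Omega>) (\<phi> -` {..<x} \<inter> space (restrict_space lborel ?\<Omega>))"
      by (rule emeasure_distr) (auto simp: measurable_restrict_space1)
    also have "\<dots> = emeasure lborel (\<phi> -` {..<x} \<inter> ?\<Omega>)"
      by (subst emeasure_restrict_space) (auto simp: space_restrict_space)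
    also have "\<dots> = ennreal (V * c x ^ ?n)"
    proof (cases "x \<le> 0")
      case True
      hence "\<phi> -` {..<x} \<inter> ?\<Omega> = {}" using phi_nonneg[OF mink] by (auto simp: not_less) (smt (verit) phi_nonneg[OF mink])
      thus ?thesis using True n0 by (simp add: c_def power_0_left)
    next
      case False
      hence "\<phi> -` {..<x} \<inter> ?\<Omega> = {v. \<phi> v < min x 1}" by auto
      moreover have "emeasure lborel {v. \<phi> v < min x 1} = ennreal ((min x 1) ^ ?n) * ennreal V"
        using emeas_scale[OF mink op, of "min x 1"] False EV by simp
      ultimately show ?thesis using False by (simp add: c_def ennreal_mult'' mult.commute)
    qed
    finally show ?thesis .
  qed
  have rhs: "emeasure ?N {..<x} = ennreal (V * c x ^ ?n)" for x
  proof -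
    have "emeasure ?N {..<x} = (\<integral>\<^sup>+ t. ennreal (?n * V * t ^ (?n - 1)) * indicator {0..1} t * indicator {..<x} t \<partial>lborel)"
      unfolding V_def by (rule emeasure_density) auto
    also have "\<dots> = ennreal (V * c x ^ ?n)"
    proof (cases "x \<le> 0")
      case True
      hence "(\<lambda>t. ennreal (?n * V * t ^ (?n - 1)) * indicator {0..1} t * indicator {..<x} t) = (\<lambda>t. 0)"
        by (intro ext) (auto simp: indicator_def)
      hence "(\<integral>\<^sup>+ t. ennreal (?n * V * t ^ (?n - 1)) * indicator {0..1} t * indicator {..<x} t \<partial>lborel) = (\<integral>\<^sup>+ (t::real). 0 \<partial>lborel)"
        by (simp only:)
      thus ?thesis using True n0 by (simp add: c_def power_0_left)
    next
      case False
      define m where "m = min x 1"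
      have m: "0 < m" "m \<le> 1" using False unfolding m_def by auto
      have "(\<integral>\<^sup>+ t. ennreal (?n * V * t ^ (?n - 1)) * indicator {0..1} t * indicator {..<x} t \<partial>lborel)
          = (\<integral>\<^sup>+ t. ennreal (?n * V * t ^ (?n - 1)) * indicator {0..m} t \<partial>lborel)"
      proof (rule nn_integral_cong_AE)
        show "AE t in lborel. ennreal (?n * V * t ^ (?n - 1)) * indicator {0..1} t * indicator {..<x} t
            = ennreal (?n * V * t ^ (?n - 1)) * indicator {0..m} t"
          using AE_lborel_singleton[of m]
        proof (rule AE_mp, intro AE_I2 impI)
          fix t :: real assume "t \<noteq> m"
          thus "ennreal (?n * V * t ^ (?n - 1)) * indicator {0..1} t * indicator {..<x} t
            = ennreal (?n * V * t ^ (?n - 1)) * indicator {0..m} t"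
            unfolding m_def by (auto simp: indicator_def)
        qed
      qed
      also have "\<dots> = ennreal (V * m ^ ?n - V * 0 ^ ?n)"
        by (rule nn_integral_FTC_Icc[where F="\<lambda>t. V * t ^ ?n"])
           (use m in \<open>auto intro!: derivative_eq_intros simp: V0\<close>)
      also have "\<dots> = ennreal (V * c x ^ ?n)" using False n0 by (simp add: c_def m_def power_0_left)
      finally show ?thesis .
    qed
    finally show ?thesis .
  qed
  show ?thesis
  proof (rule measure_eqI_lessThan')
    show "sets ?D = sets borel" "sets ?N = sets borel" by auto
    show "emeasure ?D {..<x} < \<infinity>" for x using lhs by simp
    show "emeasure ?D {..<x} = emeasure ?N {..<x}" for x using lhs rhs by simp
  qed
qed

lemma subst_exp:
  fixes h :: "real \<Rightarrow> real"
  assumes hm[measurable]: "h \<in> borel_measurable borel" and hi: "set_integrable lborel {0<..<1} h"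
  shows "(LBINT t=0..1. h t) = (LBINT r=0..\<infinity>. exp (- r) * h (1 - exp (- r)))"
proof -
  define g where "g r = 1 - exp (- r)" for r :: real
  have img: "g ` {0<..} = {0<..<1}"
  proof (intro set_eqI iffI)
    fix t assume "t \<in> g ` {0<..}"
    then obtain r where "r > 0" "t = g r" by auto
    thus "t \<in> {0<..<1}" unfolding g_def by auto
  next
    fix t :: real assume t: "t \<in> {0<..<1}"
    hence "- ln (1 - t) > 0" by simp
    moreover have "g (- ln (1 - t)) = t" unfolding g_def using t by simp
    ultimately show "t \<in> g ` {0<..}" by (metis greaterThan_iff image_eqI)
  qed
  have inj: "inj_on g {0<..}" unfolding g_def by (intro inj_onI) simp
  have der: "(g has_field_derivative exp (- r)) (at r within {0<..})" for r
    unfolding g_def by (auto intro!: derivative_eq_intros)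
  have S: "{(0::real)<..} \<in> sets lebesgue" by (rule sets_completionI_sets) simp
  have abs: "h absolutely_integrable_on {0<..<1}"
    using hi unfolding set_integrable_def by (subst integrable_completion) auto
  have "(\<lambda>x. \<bar>exp (- x)\<bar> * h (g x)) absolutely_integrable_on {0<..} \<and>
        integral {0<..} (\<lambda>x. \<bar>exp (- x)\<bar> * h (g x)) = integral {0<..<1} h"
    using has_absolute_integral_change_of_variables_1'[OF S der inj, of h "integral {0<..<1} h"] abs img
    by simp
  hence ai: "(\<lambda>x. exp (- x) * h (g x)) absolutely_integrable_on {0<..}"
    and ie: "integral {0<..} (\<lambda>x. exp (- x) * h (g x)) = integral {0<..<1} h" by auto
  have si: "set_integrable lborel {0<..} (\<lambda>x. exp (- x) * h (g x))"
    using ai unfolding set_integrable_def g_def by (subst (asm) integrable_completion) auto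
  have "(LBINT t=0..1. h t) = (LBINT t:{0<..<1}. h t)"
    using interval_integral_Ioo[of 0 1 h] by (simp add: zero_ereal_def one_ereal_def)
  also have "\<dots> = integral {0<..<1} h" by (rule set_borel_integral_eq_integral(2)[OF hi])
  also have "\<dots> = integral {0<..} (\<lambda>x. exp (- x) * h (g x))" using ie by simp
  also have "\<dots> = (LBINT r:{0<..}. exp (- r) * h (g r))"
    by (rule set_borel_integral_eq_integral(2)[OF si, symmetric])
  also have "\<dots> = (LBINT r=0..\<infinity>. exp (- r) * h (1 - exp (- r)))"
    unfolding g_def by (rule interval_lebesgue_integral_0_infty(2)[symmetric])
  finally show ?thesis .
qed

theorem lemma4p7:
  fixes \<Omega> :: "(real^'n) set" and F :: "real^'n \<Rightarrow> real^'n \<Rightarrow> real"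
    and \<phi> :: "real^'n \<Rightarrow> real" and f :: "real \<Rightarrow> real"
  assumes funk: "funk_metric_space \<Omega> F"
    and mink: "minkowski_norm \<phi>"
    and bd: "frontier \<Omega> = {v. \<phi> v = 1}"
    and FF: "\<forall>x\<in>\<Omega>. \<forall>y. F x y = \<phi> (y + F x y *\<^sub>R x)"
    and Om: "\<Omega> = {v. \<phi> v < 1}"
    and fmeas: "f \<in> borel_measurable borel"
    and fint: "set_integrable lborel \<Omega> (\<lambda>x. f (\<phi> x))"
  shows "integral\<^sup>L (BH_measure \<Omega> F) (\<lambda>x. f (\<phi> x))
           = real CARD('n) * omega TYPE('n) * (LBINT t=0..1. f t * t ^ (CARD('n) - 1))
       \<and> real CARD('n) * omega TYPE('n) * (LBINT t=0..1. f t * t ^ (CARD('n) - 1))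
           = real CARD('n) * omega TYPE('n) *
             (LBINT r=0..\<infinity>. f (1 - exp (- r)) * exp (- r) * (1 - exp (- r)) ^ (CARD('n) - 1))"
proof -
  let ?n = "CARD('n)"
  define V where "V = measure lborel \<Omega>"
  define w where "w = omega TYPE('n)"
  have opO: "open \<Omega>" and bddO: "bounded \<Omega>" and neO: "\<Omega> \<noteq> {}"
    using funk unfolding funk_metric_space_def by auto
  have fins: "finsler_metric \<Omega> F" using funk unfolding funk_metric_space_def by blast
  have fr: "\<forall>x\<in>\<Omega>. \<forall>y. y \<noteq> 0 \<longrightarrow> x + (1 / F x y) *\<^sub>R y \<in> frontier \<Omega>"
    using funk unfolding funk_metric_space_def by blast
  have Fnn: "\<forall>x\<in>\<Omega>. \<forall>y. F x y \<ge> 0" using fins unfolding finsler_metric_def by blast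
  have Fhom: "\<forall>x\<in>\<Omega>. \<forall>y. \<forall>c>0. F x (c *\<^sub>R y) = c * F x y" using fins unfolding finsler_metric_def by blast
  have op1: "open {v. \<phi> v < 1}" using opO Om by simp
  have bdd1: "bounded {v. \<phi> v < 1}" using bddO Om by simp
  have conv: "convex \<Omega>" using omega_convex[OF mink] Om by simp
  have intO: "interior \<Omega> = \<Omega>" using opO by (rule interior_open)
  have key: "F x y < 1 \<longleftrightarrow> x + y \<in> \<Omega>" if xO: "x \<in> \<Omega>" for x y
  proof (cases "y = 0")
    case True
    have "\<forall>y. \<forall>c>0. F x (c *\<^sub>R y) = c * F x y" using Fhom xO by blast
    from this[rule_format, where y=0 and c=2] have "F x 0 = 2 * F x 0" by simp
    hence "F x 0 = 0" by simp
    thus ?thesis using True xO by simp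
  next
    case False
    define c where "c = F x y"
    have cnn: "c \<ge> 0" using Fnn xO unfolding c_def by blast
    have c0: "c \<noteq> 0"
    proof
      assume "c = 0"
      hence "x \<in> frontier \<Omega>" using fr xO False unfolding c_def by force
      thus False using xO intO by (simp add: frontier_def)
    qed
    hence cpos: "c > 0" using cnn by simp
    define p where "p = x + (1/c) *\<^sub>R y"
    have pfr: "p \<in> frontier \<Omega>" using fr xO False unfolding p_def c_def by blast
    have pcl: "p \<in> closure \<Omega>" using pfr by (simp add: frontier_def)
    have pnO: "p \<notin> \<Omega>" using pfr intO by (simp add: frontier_def)
    have xp: "x \<noteq> p" using xO pnO by auto
    show ?thesis
    proof
      assume "F x y < 1"
      hence c1: "c < 1" unfolding c_def .
      have "x + y = (1 - c) *\<^sub>R x + c *\<^sub>R p" unfolding p_def using c0 by (simp add: algebra_simps)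
      hence "x + y \<in> open_segment x p" using xp cpos c1 unfolding in_segment(2) by blast
      moreover have "open_segment x p \<subseteq> interior \<Omega>"
        by (rule in_interior_closure_convex_segment[OF conv _ pcl]) (simp add: intO xO)
      ultimately show "x + y \<in> \<Omega>" using intO by auto
    next
      assume xy: "x + y \<in> \<Omega>"
      show "F x y < 1"
      proof (rule ccontr)
        assume "\<not> F x y < 1"
        hence c1: "c \<ge> 1" unfolding c_def by simp
        show False
        proof (cases "c = 1")
          case True
          hence "p = x + y" unfolding p_def by simp
          thus False using xy pnO by simp
        next
          case False
          hence c1': "c > 1" using c1 by simp
          have "p = (1 - 1/c) *\<^sub>R x + (1/c) *\<^sub>R (x + y)" unfolding p_def by (simp add: algebra_simps)
          moreover have "0 \<le> 1/c" "1/c \<le> 1" using c1' by auto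
          ultimately have "p \<in> closed_segment x (x + y)" unfolding in_segment(1) by blast
          moreover have "closed_segment x (x + y) \<subseteq> \<Omega>" using conv xO xy by (simp add: convex_contains_segment)
          ultimately show False using pnO by auto
        qed
      qed
    qed
  qed
  have Bx: "{y. F x y < 1} = (+) (- x) ` \<Omega>" if xO: "x \<in> \<Omega>" for x
  proof (intro set_eqI)
    fix y
    have "y \<in> (+) (- x) ` \<Omega> \<longleftrightarrow> x + y \<in> \<Omega>"
      by (auto simp: image_iff intro!: bexI[of _ "x + y"])
    thus "y \<in> {y. F x y < 1} \<longleftrightarrow> y \<in> (+) (- x) ` \<Omega>" using key[OF xO] by simp
  qed
  have measBx: "measure lborel {y. F x y < 1} = V" if xO: "x \<in> \<Omega>" for x
  proof -
    have "open ((+) (- x) ` \<Omega>)" using opO by (rule open_translation)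
    hence "measure lborel ((+) (- x) ` \<Omega>) = measure lebesgue ((+) (- x) ` \<Omega>)" by simp
    also have "\<dots> = measure lebesgue \<Omega>" by (rule measure_translation)
    also have "\<dots> = V" using opO by (simp add: V_def)
    finally show ?thesis using Bx[OF xO] by simp
  qed
  have fin: "emeasure lborel \<Omega> < \<infinity>" by (rule emeasure_bounded_finite[OF bddO])
  have Vpos: "V > 0"
  proof -
    obtain x where xO: "x \<in> \<Omega>" using neO by blast
    obtain e where e: "e > 0" "ball x e \<subseteq> \<Omega>" using opO xO open_contains_ball by blast
    have "0 < measure lborel (ball x e)" using content_ball_pos[OF e(1)] by simp
    also have "\<dots> \<le> V" unfolding V_def
      by (rule measure_mono_fmeasurable[OF e(2)]) (use opO fin in \<open>auto simp: fmeasurable_def\<close>)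
    finally show ?thesis .
  qed
  have w0: "w \<ge> 0" unfolding w_def omega_def by simp
  let ?M = "restrict_space lborel \<Omega>"
  have spM: "space ?M = \<Omega>" by (simp add: space_restrict_space)
  have Osets[measurable]: "\<Omega> \<in> sets borel" using opO by simp
  have phim[measurable]: "\<phi> \<in> borel_measurable borel" by (rule phi_meas[OF mink])
  have fm[measurable]: "f \<in> borel_measurable borel" by (rule fmeas)
  have phiM: "\<phi> \<in> measurable ?M borel" by (rule measurable_restrict_space1) simp
  have fphiM: "(\<lambda>x. f (\<phi> x)) \<in> borel_measurable ?M" by (rule measurable_restrict_space1) simp
  have eqfun: "(\<lambda>A. \<integral>\<^sup>+x. ennreal (omega TYPE('n) / measure lborel {y. F x y < 1}) * indicator A x \<partial>?M)
      = (\<lambda>A. \<integral>\<^sup>+x. ennreal (w / V) * indicator A x \<partial>?M)"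
    by (intro ext nn_integral_cong) (simp add: spM measBx w_def)
  have BH: "BH_measure \<Omega> F = density ?M (\<lambda>_. ennreal (w / V))"
    unfolding BH_measure_def density_def eqfun ..
  define dens where "dens t = real ?n * V * t ^ (?n - 1) * indicator {0..1} t" for t :: real
  have densm[measurable]: "dens \<in> borel_measurable borel" unfolding dens_def by measurable
  have densnn: "dens t \<ge> 0" for t unfolding dens_def using Vpos by (simp add: indicator_def)
  have dist: "distr ?M borel \<phi> = density lborel (\<lambda>t. ennreal (dens t))"
  proof -
    have "(\<lambda>t. ennreal (real ?n * V * t ^ (?n - 1)) * indicator {0..1} t) = (\<lambda>t. ennreal (dens t))"
      by (intro ext) (simp add: dens_def indicator_def)
    thus ?thesis using dist_phi[OF mink op1 bdd1] unfolding Om[symmetric] V_def by simp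
  qed
  define I where "I = (LBINT t=0..1. f t * t ^ (?n - 1))"
  have int1: "integral\<^sup>L (BH_measure \<Omega> F) (\<lambda>x. f (\<phi> x)) = (w / V) * integral\<^sup>L ?M (\<lambda>x. f (\<phi> x))"
    unfolding BH using integral_density[OF fphiM, of "\<lambda>_. w / V"] w0 Vpos by simp
  have int2: "integral\<^sup>L ?M (\<lambda>x. f (\<phi> x)) = integral\<^sup>L lborel (\<lambda>t. dens t * f t)"
  proof -
    have "integral\<^sup>L ?M (\<lambda>x. f (\<phi> x)) = integral\<^sup>L (distr ?M borel \<phi>) f"
      by (rule integral_distr[OF phiM fm, symmetric])
    also have "\<dots> = integral\<^sup>L lborel (\<lambda>t. dens t *\<^sub>R f t)"
      unfolding dist by (rule integral_density) (auto simp: densnn)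
    finally show ?thesis by simp
  qed
  have int3: "integral\<^sup>L lborel (\<lambda>t. dens t * f t) = real ?n * V * I"
  proof -
    have "I = (LBINT t:{0..1}. f t * t ^ (?n - 1))"
      unfolding I_def using interval_integral_Icc[of 0 1 "\<lambda>t. f t * t ^ (?n - 1)"]
      by (simp add: zero_ereal_def one_ereal_def)
    also have "\<dots> = integral\<^sup>L lborel (\<lambda>t. indicator {0..1} t * (f t * t ^ (?n - 1)))"
      by (simp add: set_lebesgue_integral_def)
    finally have "real ?n * V * I = real ?n * V * integral\<^sup>L lborel (\<lambda>t. indicator {0..1} t * (f t * t ^ (?n - 1)))"
      by simp
    also have "\<dots> = integral\<^sup>L lborel (\<lambda>t. real ?n * V * (indicator {0..1} t * (f t * t ^ (?n - 1))))"
      by (rule integral_mult_right_zero[symmetric])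
    also have "\<dots> = integral\<^sup>L lborel (\<lambda>t. dens t * f t)"
      by (intro arg_cong[where f="integral\<^sup>L lborel"] ext) (simp add: dens_def)
    finally show ?thesis by simp
  qed
  have conj1: "integral\<^sup>L (BH_measure \<Omega> F) (\<lambda>x. f (\<phi> x)) = real ?n * w * I"
    unfolding int1 int2 int3 using Vpos by (simp add: field_simps)
  have setint: "set_integrable lborel {0<..<1} (\<lambda>t. f t * t ^ (?n - 1))"
  proof -
    have "integrable ?M (\<lambda>x. f (\<phi> x))"
      using fint unfolding set_integrable_def by (subst integrable_restrict_space) auto
    hence "integrable (distr ?M borel \<phi>) f" by (subst integrable_distr_eq[OF phiM fm])
    hence "integrable lborel (\<lambda>t. dens t *\<^sub>R f t)"
      unfolding dist by (subst (asm) integrable_density) (auto simp: densnn)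
    hence "integrable lborel (\<lambda>t. (1 / (real ?n * V)) * (dens t * f t))" by simp
    moreover have "(\<lambda>t. (1 / (real ?n * V)) * (dens t * f t)) = (\<lambda>t. indicator {0..1} t *\<^sub>R (f t * t ^ (?n - 1)))"
      using Vpos by (intro ext) (simp add: dens_def indicator_def)
    ultimately have "set_integrable lborel {0..1} (\<lambda>t. f t * t ^ (?n - 1))"
      unfolding set_integrable_def by simp
    thus ?thesis by (rule set_integrable_subset) auto
  qed
  have "I = (LBINT r=0..\<infinity>. exp (- r) * (f (1 - exp (- r)) * (1 - exp (- r)) ^ (?n - 1)))"
    unfolding I_def by (rule subst_exp[OF _ setint]) measurable
  also have "\<dots> = (LBINT r=0..\<infinity>. f (1 - exp (- r)) * exp (- r) * (1 - exp (- r)) ^ (?n - 1))"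
    by (simp add: mult_ac)
  finally have conj2: "I = (LBINT r=0..\<infinity>. f (1 - exp (- r)) * exp (- r) * (1 - exp (- r)) ^ (?n - 1))" .
  show ?thesis using conj1 conj2 unfolding I_def w_def by simp
qed

end
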